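(* Let $A\in\mathbb{R}^{n\times n}$, $B\in\mathbb{R}^{n\times m}$ with $(A,B)$ stabilizable, and let $Q\succ 0$, $R\succ 0$ be symmetric weight matrices. Let $\tilde F\in\mathbb{R}^{m\times n}$ be such that $A+B\tilde F$ is Hurwitz and let $\tilde P\succ 0$ be the unique solution of $(A+B\tilde F)^T\tilde P+\tilde P(A+B\tilde F)+Q+\tilde F^TR\tilde F=0$; set $V(x):=x^T\tilde P x$. Consider $\dot x(t)=Ax(t)+Bu(t)$, $x(0)=x_0$, under the sample-and-hold law $u(t)=F_k x(t_k)$ for $t\in[t_k,t_{k+1})$, with triggering times $0=t_0<t_1<\cdots$, inter-execution times $\delta_k=t_{k+1}-t_k$ and gains $F_k\in\mathbb{R}^{m\times n}$. Suppose that for some given $\alpha>1$ the sequences $\{t_k\}$, $\{\delta_k\}$, $\{F_k\}$ satisfy, for every $k\ge 0$ and every $\xi\in[0,\delta_k]$, $$J_k(F_k,\xi;x_k)\le \alpha\big(V(x(t_k))-V(x(t_k+\xi))\big).$$ Then the control law is stabilizing. Moreover, for all nonzero $x_0\in\mathbb{R}^n$, the relative performance loss satisfies $\nu(x_0)\le \alpha-1$.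
   Context: $x_k:=x(t_k)$. For $\xi\ge 0$, $J_k(F_k,\xi;x_k):=\int_{t_k}^{t_k+\xi}\big(x(t)^TQx(t)+u(t)^TRu(t)\big)\,dt$, where on this interval the input is held at $u(t)=F_kx_k$. The total cost is $J(x_0):=\sum_{k=0}^{\infty}J_k(F_k,\delta_k;x_k)$, the benchmark cost is $\tilde J(x_0):=x_0^T\tilde P x_0$, and the relative performance loss is $\nu(x_0):=\big(J(x_0)-\tilde J(x_0)\big)/\tilde J(x_0)$. *)

theory Defs
  imports "HOL-Analysis.Analysis"
begin

definition quadf :: "real^'n^'n \<Rightarrow> real^'n \<Rightarrow> real" where
  "quadf M v = v \<bullet> (M *v v)"

definition pos_def :: "real^'n^'n \<Rightarrow> bool" where
  "pos_def M \<longleftrightarrow> transpose M = M \<and> (\<forall>v. v \<noteq> 0 \<longrightarrow> quadf M v > 0)"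

definition cmat :: "real^'n^'m \<Rightarrow> complex^'n^'m" where
  "cmat M = (\<chi> i j. complex_of_real (M $ i $ j))"

definition hurwitz :: "real^'n^'n \<Rightarrow> bool" where
  "hurwitz A \<longleftrightarrow> (\<forall>s::complex. det (mat s - cmat A) = 0 \<longrightarrow> Re s < 0)"

definition stabilizable :: "real^'n^'n \<Rightarrow> real^'m^'n \<Rightarrow> bool" where
  "stabilizable A B \<longleftrightarrow> (\<exists>F::real^'n^'m. hurwitz (A + B ** F))"

definition stage_cost ::
  "real^'n^'n \<Rightarrow> real^'m^'m \<Rightarrow> (real \<Rightarrow> real^'n) \<Rightarrow> real \<Rightarrow> real^'n^'m \<Rightarrow> real \<Rightarrow> real" where
  "stage_cost Q R x tk F \<xi> =
     integral {tk..tk+\<xi>} (\<lambda>t. quadf Q (x t) + quadf R (F *v x tk))"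

definition total_cost ::
  "real^'n^'n \<Rightarrow> real^'m^'m \<Rightarrow> (real \<Rightarrow> real^'n) \<Rightarrow> (nat \<Rightarrow> real) \<Rightarrow> (nat \<Rightarrow> real^'n^'m) \<Rightarrow> real" where
  "total_cost Q R x t F = (\<Sum>k. stage_cost Q R x (t k) (F k) (t (Suc k) - t k))"

definition perf_loss ::
  "real^'n^'n \<Rightarrow> real^'m^'m \<Rightarrow> real^'n^'n \<Rightarrow> (real \<Rightarrow> real^'n) \<Rightarrow> (nat \<Rightarrow> real) \<Rightarrow> (nat \<Rightarrow> real^'n^'m) \<Rightarrow> real^'n \<Rightarrow> real" where
  "perf_loss Q R P x t F x0 = (total_cost Q R x t F - quadf P x0) / quadf P x0"

end

theory Submission
  imports Defs
begin
lemma quadf_scale: "quadf P (r *\<^sub>R v) = r^2 * quadf P v"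
  by (simp add: quadf_def matrix_vector_mult_scaleR power2_eq_square)

lemma quadf_zero[simp]: "quadf P 0 = 0"
  by (simp add: quadf_def)

lemma quadf_cont: "continuous_on S (quadf P)"
proof -
  have "quadf P = (\<lambda>v. v \<bullet> (P *v v))" by (simp add: quadf_def[abs_def])
  moreover have "continuous_on S (\<lambda>v. v \<bullet> (P *v v))"
    by (intro continuous_intros linear_continuous_on matrix_vector_mul_bounded_linear)
  ultimately show ?thesis by simp
qed

lemma quadf_nonneg: "pos_def P \<Longrightarrow> 0 \<le> quadf P v"
  unfolding pos_def_def by (cases "v = 0") (auto intro: less_imp_le)

lemma quadf_upper: "\<exists>C>0. \<forall>v. quadf P v \<le> C * (norm v)^2"
proof -
  obtain K where K: "K > 0" "\<And>v. norm (P *v v) \<le> norm v * K"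
    using bounded_linear.pos_bounded[OF matrix_vector_mul_bounded_linear[of P]] by blast
  have "quadf P v \<le> K * (norm v)^2" for v
  proof -
    have "quadf P v \<le> norm v * norm (P *v v)" unfolding quadf_def by (rule norm_cauchy_schwarz)
    also have "\<dots> \<le> norm v * (norm v * K)" by (rule mult_left_mono[OF K(2)]) simp
    finally show ?thesis by (simp add: power2_eq_square mult_ac)
  qed
  with K show ?thesis by blast
qed

lemma quadf_lower:
  fixes P :: "real^'n^'n"
  assumes "pos_def P"
  shows "\<exists>c>0. \<forall>v. c * (norm v)^2 \<le> quadf P v"
proof -
  obtain w0 :: "real^'n" where w0: "norm w0 = 1" using vector_choose_size[of 1] by auto
  have ne: "sphere (0::real^'n) 1 \<noteq> {}" using w0 by auto
  obtain w where w: "w \<in> sphere 0 1" and wmin: "\<And>y. y \<in> sphere 0 1 \<Longrightarrow> quadf P w \<le> quadf P y"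
    using continuous_attains_inf[OF compact_sphere ne quadf_cont[of _ P]] by blast
  have "w \<noteq> 0" using w by auto
  hence cpos: "quadf P w > 0" using assms unfolding pos_def_def by auto
  have "quadf P w * (norm v)^2 \<le> quadf P v" for v
  proof (cases "v = 0")
    case True then show ?thesis by simp
  next
    case False
    let ?y = "(1 / norm v) *\<^sub>R v"
    have "?y \<in> sphere 0 1" using False by simp
    hence "quadf P w \<le> quadf P ?y" by (rule wmin)
    also have "\<dots> = quadf P v / (norm v)^2" by (simp add: quadf_scale power2_eq_square)
    finally show ?thesis using False by (simp add: field_simps)
  qed
  with cpos show ?thesis by blast
qed

lemma mvt_vec:
  fixes f :: "real \<Rightarrow> 'a::real_normed_vector"
  assumes "a \<le> b"
    and d: "\<And>s. s \<in> {a..b} \<Longrightarrow> (f has_vector_derivative f' s) (at s within {a..b})"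
    and K: "\<And>s. s \<in> {a..b} \<Longrightarrow> norm (f' s) \<le> K"
  shows "norm (f b - f a) \<le> K * (b - a)"
proof -
  have "norm (f b - f a) \<le> K * norm (b - a)"
  proof (rule differentiable_bound[where S="{a..b}" and f'="\<lambda>s h. h *\<^sub>R f' s"])
    show "convex {a..b}" by simp
    show "(f has_derivative (\<lambda>h. h *\<^sub>R f' s)) (at s within {a..b})" if "s \<in> {a..b}" for s
      using d[OF that] by (simp add: has_vector_derivative_def)
    show "onorm (\<lambda>h. h *\<^sub>R f' s) \<le> K" if "s \<in> {a..b}" for s
    proof (rule onorm_bound)
      have "0 \<le> norm (f' s)" by simp
      thus "0 \<le> K" using K[OF that] by linarith
      show "norm (h *\<^sub>R f' s) \<le> K * norm h" for h
        using K[OF that] by (simp add: mult_left_mono mult.commute[of K])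
    qed
  qed (use assms in auto)
  thus ?thesis using assms by simp
qed

theorem theorem1:
  fixes A :: "real^'n^'n" and B :: "real^'m^'n"
    and Q :: "real^'n^'n" and R :: "real^'m^'m"
    and Ft :: "real^'n^'m" and Pt :: "real^'n^'n"
    and \<alpha> :: real and x0 :: "real^'n"
    and t :: "nat \<Rightarrow> real" and F :: "nat \<Rightarrow> real^'n^'m"
    and x :: "real \<Rightarrow> real^'n"
  assumes stab: "stabilizable A B"
    and Q: "pos_def Q" and R: "pos_def R"
    and hur: "hurwitz (A + B ** Ft)"
    and Pt: "pos_def Pt"
    and lyap: "transpose (A + B ** Ft) ** Pt + Pt ** (A + B ** Ft) + Q + transpose Ft ** R ** Ft = 0"
    and t0: "t 0 = 0" and tinc: "\<And>k. t k < t (Suc k)"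
    and tunb: "filterlim t at_top sequentially"
    and x0: "x 0 = x0"
    and ode: "\<And>k s. s \<in> {t k..t (Suc k)} \<Longrightarrow>
       (x has_vector_derivative (A *v x s + B *v (F k *v x (t k)))) (at s within {t k..t (Suc k)})"
    and \<alpha>: "\<alpha> > 1"
    and trig: "\<And>k \<xi>. \<xi> \<in> {0..t (Suc k) - t k} \<Longrightarrow>
       stage_cost Q R x (t k) (F k) \<xi> \<le> \<alpha> * (quadf Pt (x (t k)) - quadf Pt (x (t k + \<xi>)))"
  shows "(x \<longlongrightarrow> 0) at_top \<and>
    (x0 \<noteq> 0 \<longrightarrow> summable (\<lambda>k. stage_cost Q R x (t k) (F k) (t (Suc k) - t k))
                  \<and> perf_loss Q R Pt x t F x0 \<le> \<alpha> - 1)"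
proof -
  define V where "V k = quadf Pt (x (t k))" for k
  define u where "u k = F k *v x (t k)" for k
  define d where "d k = t (Suc k) - t k" for k
  define J where "J k = stage_cost Q R x (t k) (F k) (d k)" for k
  have apos: "\<alpha> > 0" using \<alpha> by simp
  have dpos: "d k > 0" for k using tinc[of k] by (simp add: d_def)
  have contx: "continuous_on {t k..t (Suc k)} x" for k
    unfolding continuous_on_eq_continuous_within
    using ode[of _ k] has_vector_derivative_continuous by blast
  have integ: "(\<lambda>s. quadf Q (x s) + quadf R (u k)) integrable_on {t k..t k + \<xi>}"
    if "\<xi> \<in> {0..d k}" for k \<xi>
  proof -
    have sub: "{t k..t k + \<xi>} \<subseteq> {t k..t (Suc k)}" using that by (auto simp: d_def)
    have "continuous_on {t k..t k + \<xi>} (\<lambda>s. quadf Q (x s) + quadf R (u k))"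
      by (intro continuous_intros continuous_on_compose2[OF quadf_cont[of UNIV Q] continuous_on_subset[OF contx sub]]) auto
    thus ?thesis by (rule integrable_continuous_interval)
  qed
  have sc: "stage_cost Q R x (t k) (F k) \<xi> = integral {t k..t k + \<xi>} (\<lambda>s. quadf Q (x s) + quadf R (u k))" for k \<xi>
    by (simp add: stage_cost_def u_def)
  have lowJ: "\<xi> * g \<le> stage_cost Q R x (t k) (F k) \<xi>"
    if "\<xi> \<in> {0..d k}" "\<And>s. s \<in> {t k..t k + \<xi>} \<Longrightarrow> g \<le> quadf Q (x s) + quadf R (u k)" for k \<xi> g
  proof -
    have "integral {t k..t k + \<xi>} (\<lambda>s. g) \<le> integral {t k..t k + \<xi>} (\<lambda>s. quadf Q (x s) + quadf R (u k))"
      by (rule integral_le[OF integrable_const_ivl integ[OF that(1)] that(2)])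
    thus ?thesis using that(1) by (simp add: sc)
  qed
  have Jnn: "0 \<le> stage_cost Q R x (t k) (F k) \<xi>" if "\<xi> \<in> {0..d k}" for k \<xi>
    using lowJ[OF that, of 0] quadf_nonneg[OF Q] quadf_nonneg[OF R] by (simp add: add_nonneg_nonneg)
  have JR: "\<xi> * quadf R (u k) \<le> stage_cost Q R x (t k) (F k) \<xi>" if "\<xi> \<in> {0..d k}" for k \<xi>
    using lowJ[OF that, of "quadf R (u k)"] quadf_nonneg[OF Q] by simp
  have trig': "stage_cost Q R x (t k) (F k) \<xi> \<le> \<alpha> * (V k - quadf Pt (x (t k + \<xi>)))" if "\<xi> \<in> {0..d k}" for k \<xi>
    using trig[of \<xi> k] that by (simp add: V_def d_def)
  have Vin: "quadf Pt (x (t k + \<xi>)) \<le> V k" if "\<xi> \<in> {0..d k}" for k \<xi>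
  proof -
    have "0 \<le> \<alpha> * (V k - quadf Pt (x (t k + \<xi>)))" using Jnn[OF that] trig'[OF that] by linarith
    thus ?thesis using apos by (simp add: zero_le_mult_iff)
  qed
  have Vnn: "0 \<le> V k" for k by (simp add: V_def quadf_nonneg[OF Pt])
  have dk: "d k \<in> {0..d k}" for k using dpos[of k] by simp
  have tk: "t k + d k = t (Suc k)" for k by (simp add: d_def)
  have Vstep: "J k \<le> \<alpha> * (V k - V (Suc k))" for k
    using trig'[OF dk, of k] by (simp add: J_def tk V_def)
  have Jnn': "0 \<le> J k" for k using Jnn[OF dk] by (simp add: J_def)
  have Vdec: "V (Suc k) \<le> V k" for k
  proof -
    have "0 \<le> \<alpha> * (V k - V (Suc k))" using Vstep[of k] Jnn'[of k] by linarith
    thus ?thesis using apos by (simp add: zero_le_mult_iff)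
  qed
  have decV: "decseq V" using Vdec by (simp add: decseq_Suc_iff)
  have VleV0: "V k \<le> V 0" for k using decV by (simp add: decseq_def)
  have V0: "V 0 = quadf Pt x0" using t0 x0 by (simp add: V_def)
  have partial: "(\<Sum>i<N. J i) \<le> \<alpha> * (V 0 - V N)" for N
  proof (induction N)
    case 0 then show ?case by simp
  next
    case (Suc N) then show ?case using Vstep[of N] by (simp add: algebra_simps)
  qed
  have partial': "(\<Sum>i<N. J i) \<le> \<alpha> * V 0" for N
  proof -
    have "0 \<le> \<alpha> * V N" using apos Vnn[of N] by simp
    thus ?thesis using partial[of N] by (simp add: right_diff_distrib)
  qed
  have summJ: "summable J" by (rule summableI_nonneg_bounded[OF Jnn' partial'])
  have sumJle: "suminf J \<le> \<alpha> * V 0" by (rule suminf_le_const[OF summJ partial'])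
  obtain pmin where pmin: "pmin > 0" "\<And>v. pmin * (norm v)^2 \<le> quadf Pt v" using quadf_lower[OF Pt] by blast
  obtain Cp where Cp: "Cp > 0" "\<And>v. quadf Pt v \<le> Cp * (norm v)^2" using quadf_upper[of Pt] by blast
  obtain qmin where qmin: "qmin > 0" "\<And>v. qmin * (norm v)^2 \<le> quadf Q v" using quadf_lower[OF Q] by blast
  obtain rmin where rmin: "rmin > 0" "\<And>v. rmin * (norm v)^2 \<le> quadf R v" using quadf_lower[OF R] by blast
  obtain a where a: "a > 0" "\<And>v. norm (A *v v) \<le> norm v * a"
    using bounded_linear.pos_bounded[OF matrix_vector_mul_bounded_linear[of A]] by blast
  obtain b where b: "b > 0" "\<And>v. norm (B *v v) \<le> norm v * b"
    using bounded_linear.pos_bounded[OF matrix_vector_mul_bounded_linear[of B]] by blast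
  define M where "M = sqrt (V 0 / pmin)"
  have Mnn: "0 \<le> M" unfolding M_def using Vnn[of 0] pmin(1) by simp
  have xin: "quadf Pt (x s) \<le> V k" if "s \<in> {t k..t (Suc k)}" for k s
    using Vin[of "s - t k" k] that by (simp add: d_def)
  have xbound: "norm (x s) \<le> M" if "s \<in> {t k..t (Suc k)}" for k s
  proof -
    have "pmin * (norm (x s))^2 \<le> V 0" using pmin(2)[of "x s"] xin[OF that] VleV0[of k] by linarith
    hence "(norm (x s))^2 \<le> V 0 / pmin" using pmin(1) by (simp add: field_simps)
    thus ?thesis unfolding M_def by (rule real_le_rsqrt)
  qed
  have Vsmall: "\<exists>k. V k < \<epsilon>" if epos: "\<epsilon> > 0" for \<epsilon>
  proof (rule ccontr)
    assume "\<not> ?thesis"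
    hence Vge: "\<epsilon> \<le> V k" for k by (simp add: not_less)
    define c where "c = sqrt (\<epsilon> / Cp)"
    have cpos: "c > 0" using epos Cp(1) by (simp add: c_def)
    have xkge: "c \<le> norm (x (t k))" for k
    proof -
      have "\<epsilon> \<le> Cp * (norm (x (t k)))^2" using Vge[of k] Cp(2)[of "x (t k)"] by (simp add: V_def)
      hence "\<epsilon> / Cp \<le> (norm (x (t k)))^2" using Cp(1) by (simp add: field_simps)
      hence "c \<le> sqrt ((norm (x (t k)))^2)" unfolding c_def by (rule real_sqrt_le_mono)
      thus ?thesis by simp
    qed
    define W where "W = \<alpha> * V 0"
    have Wnn: "0 \<le> W" using apos Vnn[of 0] by (simp add: W_def)
    obtain h where h: "h > 0" "a * M * h \<le> c / 4" "b^2 * W * h \<le> rmin * (c/4)^2"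
    proof
      define h where "h = min (c / (4 * (a * M) + 1)) (rmin * (c/4)^2 / (b^2 * W + 1))"
      have aM: "0 \<le> a * M" using a(1) Mnn by simp
      have bW: "0 \<le> b^2 * W" using Wnn by simp
      have r: "0 < rmin * (c/4)^2" using rmin(1) cpos by simp
      show "h > 0" unfolding h_def using aM bW cpos r by simp
      have "a * M * h \<le> a * M * (c / (4 * (a * M) + 1))"
        unfolding h_def by (rule mult_left_mono[OF min.cobounded1 aM])
      also have "\<dots> \<le> c / 4" using aM cpos by (simp add: field_simps)
      finally show "a * M * h \<le> c / 4" .
      have "b^2 * W * h \<le> b^2 * W * (rmin * (c/4)^2 / (b^2 * W + 1))"
        unfolding h_def by (rule mult_left_mono[OF min.cobounded2 bW])
      also have "\<dots> \<le> rmin * (c/4)^2" using bW r by (simp add: field_simps)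
      finally show "b^2 * W * h \<le> rmin * (c/4)^2" .
    qed
    have disp: "norm (x (t k + \<xi>) - x (t k)) \<le> c / 2" if "\<xi> \<in> {0..min (d k) h}" for k \<xi>
    proof -
      have \<xi>d: "\<xi> \<in> {0..d k}" using that by auto
      have sub: "{t k..t k + \<xi>} \<subseteq> {t k..t (Suc k)}" using \<xi>d by (auto simp: d_def)
      have "norm (x (t k + \<xi>) - x (t k)) \<le> (M * a + norm (u k) * b) * (t k + \<xi> - t k)"
      proof (rule mvt_vec)
        show "t k \<le> t k + \<xi>" using that by simp
        show "(x has_vector_derivative (A *v x s + B *v u k)) (at s within {t k..t k + \<xi>})"
          if "s \<in> {t k..t k + \<xi>}" for s
          using has_vector_derivative_within_subset[OF ode[of s k] sub] that sub by (auto simp: u_def)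
        show "norm (A *v x s + B *v u k) \<le> M * a + norm (u k) * b" if "s \<in> {t k..t k + \<xi>}" for s
        proof -
          have "norm (A *v x s + B *v u k) \<le> norm (A *v x s) + norm (B *v u k)" by (rule norm_triangle_ineq)
          also have "\<dots> \<le> norm (x s) * a + norm (u k) * b" using a(2) b(2) by (rule add_mono)
          also have "\<dots> \<le> M * a + norm (u k) * b" using xbound[of s k] that sub a(1) by (auto intro: mult_right_mono)
          finally show ?thesis .
        qed
      qed
      hence D: "norm (x (t k + \<xi>) - x (t k)) \<le> a * M * \<xi> + b * (\<xi> * norm (u k))" by (simp add: algebra_simps)
      have "\<xi> * (rmin * (norm (u k))^2) \<le> \<xi> * quadf R (u k)" using rmin(2) that by (auto intro: mult_left_mono)
      also have "\<dots> \<le> stage_cost Q R x (t k) (F k) \<xi>" by (rule JR[OF \<xi>d])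
      also have "\<dots> \<le> \<alpha> * V k"
      proof -
        have "\<alpha> * (V k - quadf Pt (x (t k + \<xi>))) \<le> \<alpha> * V k"
          using quadf_nonneg[OF Pt, of "x (t k + \<xi>)"] apos by (simp add: right_diff_distrib)
        thus ?thesis using trig'[OF \<xi>d] by linarith
      qed
      also have "\<dots> \<le> W" unfolding W_def using VleV0[of k] apos by simp
      finally have uW: "\<xi> * (rmin * (norm (u k))^2) \<le> W" .
      have "(b * (\<xi> * norm (u k)))^2 = b^2 * \<xi> * (\<xi> * (norm (u k))^2)" by (simp add: power2_eq_square)
      also have "\<dots> \<le> b^2 * \<xi> * (W / rmin)"
        using uW rmin(1) that by (intro mult_left_mono) (auto simp: field_simps)
      also have "\<dots> \<le> b^2 * h * (W / rmin)"
        using that Wnn rmin(1) by (intro mult_right_mono mult_left_mono) auto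
      also have "\<dots> = (b^2 * W * h) / rmin" by simp
      also have "\<dots> \<le> (rmin * (c/4)^2) / rmin" using rmin(1) by (intro divide_right_mono[OF h(3)]) simp
      also have "\<dots> = (c/4)^2" using rmin(1) by simp
      finally have sq: "(b * (\<xi> * norm (u k)))^2 \<le> (c/4)^2" .
      have "b * (\<xi> * norm (u k)) \<le> c/4"
        using cpos by (intro power2_le_imp_le[OF sq]) simp
      moreover have "a * M * \<xi> \<le> a * M * h" using that a(1) Mnn by (intro mult_left_mono) auto
      ultimately show ?thesis using D h(2) by linarith
    qed
    define \<gamma> where "\<gamma> = qmin * (c/2)^2"
    have gpos: "\<gamma> > 0" using qmin(1) cpos by (simp add: \<gamma>_def)
    define m where "m k = min (d k) h" for k
    have mJ: "m k * \<gamma> \<le> J k" for k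
    proof -
      have mk: "m k \<in> {0..d k}" using dpos[of k] h(1) by (auto simp: m_def)
      have "m k * \<gamma> \<le> stage_cost Q R x (t k) (F k) (m k)"
      proof (rule lowJ[OF mk])
        fix s assume s: "s \<in> {t k..t k + m k}"
        have "s - t k \<in> {0..min (d k) h}" using s by (auto simp: m_def)
        from disp[OF this] have "norm (x s - x (t k)) \<le> c/2" by simp
        moreover have "norm (x (t k)) \<le> norm (x s) + norm (x s - x (t k))"
          using norm_triangle_ineq[of "x s" "x (t k) - x s"] by (simp add: norm_minus_commute)
        ultimately have "c/2 \<le> norm (x s)" using xkge[of k] by linarith
        hence "(c/2)^2 \<le> (norm (x s))^2" using cpos by (intro power_mono) auto
        hence "\<gamma> \<le> qmin * (norm (x s))^2" unfolding \<gamma>_def using qmin(1) by simp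
        hence "\<gamma> \<le> quadf Q (x s)" using qmin(2)[of "x s"] by linarith
        thus "\<gamma> \<le> quadf Q (x s) + quadf R (u k)" using quadf_nonneg[OF R, of "u k"] by linarith
      qed
      also have "\<dots> \<le> J k"
        unfolding J_def sc
      proof (rule integral_subset_le)
        show "{t k..t k + m k} \<subseteq> {t k..t k + d k}" using mk by auto
        show "(\<lambda>s. quadf Q (x s) + quadf R (u k)) integrable_on {t k..t k + m k}" by (rule integ[OF mk])
        show "(\<lambda>s. quadf Q (x s) + quadf R (u k)) integrable_on {t k..t k + d k}" by (rule integ[OF dk])
        show "\<forall>s\<in>{t k..t k + d k}. 0 \<le> quadf Q (x s) + quadf R (u k)"
          using quadf_nonneg[OF Q] quadf_nonneg[OF R] by (simp add: add_nonneg_nonneg)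
      qed
      finally show ?thesis .
    qed
    have summ: "summable m"
    proof (rule summable_comparison_test'[where g="\<lambda>k. J k / \<gamma>" and N=0])
      show "summable (\<lambda>k. J k / \<gamma>)" using summJ by (rule summable_divide)
      show "norm (m k) \<le> J k / \<gamma>" for k
        using mJ[of k] gpos dpos[of k] h(1) by (simp add: m_def field_simps)
    qed
    have "m \<longlonglongrightarrow> 0" by (rule summable_LIMSEQ_zero[OF summ])
    then have "eventually (\<lambda>k. m k < h) sequentially" using h(1) by (simp add: order_tendstoD)
    then have ev: "eventually (\<lambda>k. m k = d k) sequentially"
      by eventually_elim (auto simp: m_def min_def split: if_splits)
    have summd: "summable d" using summable_cong[OF ev] summ by simp
    have tN: "t N = (\<Sum>k<N. d k)" for N using sum_lessThan_telescope[of t N] t0 by (simp add: d_def)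
    have tle: "t N \<le> suminf d" for N unfolding tN
      by (rule sum_le_suminf[OF summd]) (auto intro: less_imp_le dpos)
    have "eventually (\<lambda>N. t N \<ge> suminf d + 1) sequentially" using tunb by (simp add: filterlim_at_top)
    then obtain N where "t N \<ge> suminf d + 1" by (auto simp: eventually_sequentially)
    thus False using tle[of N] by linarith
  qed
  have incT: "incseq t" using tinc by (simp add: incseq_Suc_iff less_imp_le)
  have xlim: "(x \<longlongrightarrow> 0) at_top"
  proof (rule tendstoI)
    fix e :: real assume e: "e > 0"
    obtain K where K: "V K < pmin * e^2" using Vsmall[of "pmin * e^2"] pmin(1) e by auto
    show "eventually (\<lambda>s. dist (x s) 0 < e) at_top"
      unfolding eventually_at_top_linorder
    proof (intro exI allI impI)
      fix s assume s: "s \<ge> t K"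
      have "eventually (\<lambda>N. t N \<ge> s + 1) sequentially" using tunb by (simp add: filterlim_at_top)
      then obtain N where "t N \<ge> s + 1" by (auto simp: eventually_sequentially)
      hence ex: "\<exists>n. s < t n" by (intro exI[of _ N]) linarith
      define n where "n = (LEAST n. s < t n)"
      have sn: "s < t n" unfolding n_def by (rule LeastI_ex[OF ex])
      have Kn: "K < n"
      proof (rule ccontr)
        assume "\<not> K < n"
        hence "t n \<le> t K" using incT by (simp add: incseq_def)
        thus False using sn s by linarith
      qed
      then obtain k where nk: "n = Suc k" using not0_implies_Suc by fastforce
      have "\<not> s < t k" using not_less_Least[of k "\<lambda>n. s < t n"] nk unfolding n_def by auto
      hence sk: "s \<in> {t k..t (Suc k)}" using sn nk by auto
      have Kk: "K \<le> k" using Kn nk by simp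
      have "pmin * (norm (x s))^2 \<le> quadf Pt (x s)" by (rule pmin(2))
      also have "\<dots> \<le> V k" by (rule xin[OF sk])
      also have "\<dots> \<le> V K" using decV Kk by (simp add: decseq_def)
      also have "\<dots> < pmin * e^2" by (rule K)
      finally have "pmin * (norm (x s))^2 < pmin * e^2" .
      hence sq: "(norm (x s))^2 < e^2" using pmin(1) by simp
      have "norm (x s) < e" using e by (intro power2_less_imp_less[OF sq]) simp
      thus "dist (x s) 0 < e" by simp
    qed
  qed
  show ?thesis
  proof (intro conjI impI xlim)
    assume nz: "x0 \<noteq> 0"
    have Jeq: "J = (\<lambda>k. stage_cost Q R x (t k) (F k) (t (Suc k) - t k))"
      by (rule ext) (simp add: J_def d_def)
    show "summable (\<lambda>k. stage_cost Q R x (t k) (F k) (t (Suc k) - t k))"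
      using summJ by (simp add: Jeq)
    have V0pos: "quadf Pt x0 > 0" using Pt nz by (simp add: pos_def_def)
    have tc: "total_cost Q R x t F = suminf J" by (simp add: total_cost_def Jeq)
    have "total_cost Q R x t F - quadf Pt x0 \<le> (\<alpha> - 1) * quadf Pt x0"
      using sumJle V0 tc by (simp add: algebra_simps)
    thus "perf_loss Q R Pt x t F x0 \<le> \<alpha> - 1"
      unfolding perf_loss_def using V0pos by (simp add: pos_divide_le_eq)
  qed
qed

end
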